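(* Let $W$ be a real $p\times p$ matrix that is similar to a symmetric positive semidefinite matrix and satisfies $\mathrm{tr}(W)>0$. Let $c>0$, $\hat\alpha=c\,\mathrm{tr}(W)$ and $V=(W+\hat\alpha I_p)^{-1}$. Then: (1) $1/(1+c)\le\mathrm{tr}(VW)\le p/(1+cp)$; (2) $p^2/(1+cp)\le\mathrm{tr}(V)\,\mathrm{tr}(W)\le p/c$; (3) $\mathrm{tr}(V^2W)\le\mathrm{tr}(V)/(1+cp)\le\mathrm{tr}(V)$; (4) $\mathrm{tr}(V^3W)\le\mathrm{tr}(V^2)/(1+cp)\le(\mathrm{tr}V)^2/(1+cp)$; (5) $\mathrm{tr}(V^3W)\le\mathrm{tr}(V^2W)\,\mathrm{tr}(V)$; (6) $\mathrm{tr}(V^2)\le(\mathrm{tr}V)^2\big[1-(p-1)c/\{p(1+c)\}\big]$; (7) $\mathrm{tr}(V^3W)\le\mathrm{tr}(V^2W)\,\mathrm{tr}(V)\big[1-(p-1)c/\{p(1+c)\}\big]$; (8) $-c\{\mathrm{tr}(V)\mathrm{tr}(W)-\mathrm{tr}(VW)\}/(1+cp)\le-\mathrm{tr}(VW)+(1+c)\mathrm{tr}(V^2W^2)\le0$.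
   Context: In the paper this is applied with $W=(X-\bar X)(X-\bar X)^\top\Sigma^{-1}$ in the case $n-1\ge p$, where $\bar X$ is the matrix whose columns all equal the sample mean of the columns of $X$ and $\Sigma$ is positive definite; such $W$ is similar to the symmetric positive semidefinite matrix $\Sigma^{-1/2}(X-\bar X)(X-\bar X)^\top\Sigma^{-1/2}$. *)

theory Defs
  imports "HOL-Analysis.Analysis"
begin

definition symmetric_matrix :: "real^'n^'n \<Rightarrow> bool" where
  "symmetric_matrix A \<longleftrightarrow> transpose A = A"

definition pos_semidef :: "real^'n^'n \<Rightarrow> bool" where
  "pos_semidef A \<longleftrightarrow> symmetric_matrix A \<and> (\<forall>x. 0 \<le> x \<bullet> (A *v x))"

definition similar_mat :: "real^'n^'n \<Rightarrow> real^'n^'n \<Rightarrow> bool" where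
  "similar_mat A B \<longleftrightarrow> (\<exists>P. invertible P \<and> A = matrix_inv P ** B ** P)"

end

theory Submission
  imports Defs
begin


lemma cheb:
  fixes x y :: "'n::finite \<Rightarrow> real"
  assumes "\<And>i j. (x i - x j) * (y i - y j) \<le> 0"
  shows "real CARD('n) * (\<Sum>i\<in>UNIV. x i * y i) \<le> (\<Sum>i\<in>UNIV. x i) * (\<Sum>i\<in>UNIV. y i)"
proof -
  have "(\<Sum>i\<in>UNIV. \<Sum>j\<in>UNIV. (x i - x j) * (y i - y j)) \<le> 0"
    by (intro sum_nonpos) (use assms in auto)
  moreover have "(\<Sum>i\<in>UNIV. \<Sum>j\<in>UNIV. (x i - x j) * (y i - y j)) =
     2 * (real CARD('n) * (\<Sum>i\<in>UNIV. x i * y i)) - 2 * ((\<Sum>i\<in>UNIV. x i) * (\<Sum>i\<in>UNIV. y i))"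
    by (simp add: algebra_simps sum.distrib sum_subtractf sum_distrib_left sum_distrib_right
         sum.swap[of "\<lambda>i j. x j * y i"])
  ultimately show ?thesis by simp
qed

lemma div_help:
  fixes p q X Y :: real
  assumes "p > 0" "q > 0" "p * X \<le> Y * (p / q)"
  shows "X \<le> Y / q"
proof -
  have "Y * (p / q) = p * (Y / q)" by simp
  with assms(3) have "p * X \<le> p * (Y / q)" by (simp only:)
  with assms(1) show ?thesis by (metis mult_le_cancel_left_pos)
qed

lemma div_ge1:
  fixes A q :: real
  assumes "A \<ge> 0" "q \<ge> 1"
  shows "A / q \<le> A"
  using divide_left_mono[OF assms(2) assms(1)] assms(2) by simp

lemma tang_aux:
  fixes u v :: real assumes "u > 0" "v > 0"
  shows "1/u - (1/v - (u - v) / v ^ 2) = (u - v) ^ 2 / (u * v ^ 2)"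
  using assms by (simp add: field_simps power2_eq_square)

lemma scalar_part:
  fixes l :: "'n::finite \<Rightarrow> real" and c T :: real
  assumes l0: "\<And>i. 0 \<le> l i" and T: "T = sum l UNIV" and Tp: "T > 0" and c: "c > 0"
  defines "p \<equiv> real CARD('n)"
    and "a \<equiv> \<lambda>i. 1 / (l i + c * T)"
  shows "sum (\<lambda>i. 1 / (l i + c*T)) UNIV \<ge> p^2 / (T * (1 + c*p))"
proof -
  define \<alpha> where "\<alpha> = c * T"
  have al: "\<alpha> > 0" using c Tp by (simp add: \<alpha>_def)
  have p1: "p \<ge> 1" unfolding p_def by (simp add: Suc_le_eq)
  define m where "m = T / p"
  have m0: "m > 0" using Tp p1 by (simp add: m_def)
  have tang: "1/(l i + \<alpha>) \<ge> 1/(m+\<alpha>) - (l i - m)/(m+\<alpha>)^2" for i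
  proof -
    have "1/(l i + \<alpha>) - (1/(m+\<alpha>) - (l i - m)/(m+\<alpha>)^2) = (l i - m)^2/((l i+\<alpha>)*(m+\<alpha>)^2)"
      using tang_aux[of "l i + \<alpha>" "m + \<alpha>"] l0[of i] al m0 by simp
    also have "\<dots> \<ge> 0" using l0[of i] al m0 by simp
    finally show ?thesis by simp
  qed
  have "sum (\<lambda>i. 1/(l i + \<alpha>)) UNIV \<ge> sum (\<lambda>i. 1/(m+\<alpha>) - (l i - m)/(m+\<alpha>)^2) UNIV"
    by (rule sum_mono) (rule tang)
  also have "sum (\<lambda>i. 1/(m+\<alpha>) - (l i - m)/(m+\<alpha>)^2) UNIV = p/(m+\<alpha>) - (T - p*m)/(m+\<alpha>)^2"
    by (simp add: sum_subtractf sum_divide_distrib[symmetric] T p_def)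
  also have "\<dots> = p^2 / (T * (1 + c*p))"
    using p1 Tp c unfolding m_def \<alpha>_def by (simp add: field_simps power2_eq_square)
  finally show ?thesis unfolding \<alpha>_def .
qed

lemma scalar_main:
  fixes l :: "'n::finite \<Rightarrow> real" and c T :: real
  assumes l0: "\<And>i. 0 \<le> l i" and T: "T = sum l UNIV" and Tp: "T > 0" and c: "c > 0"
  defines "p \<equiv> real CARD('n)"
    and "a \<equiv> \<lambda>i. 1 / (l i + c * T)"
  shows
    "(1 / (1 + c) \<le> (\<Sum>i\<in>UNIV. a i * l i) \<and> (\<Sum>i\<in>UNIV. a i * l i) \<le> p / (1 + c * p)) \<and>
     (p^2 / (1 + c * p) \<le> sum a UNIV * T \<and> sum a UNIV * T \<le> p / c) \<and>
     ((\<Sum>i\<in>UNIV. a i * a i * l i) \<le> sum a UNIV / (1 + c * p) \<and> sum a UNIV / (1 + c * p) \<le> sum a UNIV) \<and>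
     ((\<Sum>i\<in>UNIV. a i * a i * a i * l i) \<le> (\<Sum>i\<in>UNIV. a i * a i) / (1 + c * p) \<and>
       (\<Sum>i\<in>UNIV. a i * a i) / (1 + c * p) \<le> (sum a UNIV)^2 / (1 + c * p)) \<and>
     ((\<Sum>i\<in>UNIV. a i * a i * a i * l i) \<le> (\<Sum>i\<in>UNIV. a i * a i * l i) * sum a UNIV) \<and>
     ((\<Sum>i\<in>UNIV. a i * a i) \<le> (sum a UNIV)^2 * (1 - (p - 1) * c / (p * (1 + c)))) \<and>
     ((\<Sum>i\<in>UNIV. a i * a i * a i * l i) \<le> (\<Sum>i\<in>UNIV. a i * a i * l i) * sum a UNIV * (1 - (p - 1) * c / (p * (1 + c)))) \<and>
     (- c * (sum a UNIV * T - (\<Sum>i\<in>UNIV. a i * l i)) / (1 + c * p)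
        \<le> - (\<Sum>i\<in>UNIV. a i * l i) + (1 + c) * (\<Sum>i\<in>UNIV. a i * a i * l i * l i) \<and>
     - (\<Sum>i\<in>UNIV. a i * l i) + (1 + c) * (\<Sum>i\<in>UNIV. a i * a i * l i * l i) \<le> 0)"
proof -
  define \<alpha> where "\<alpha> = c * T"
  have al: "\<alpha> > 0" using c Tp by (simp add: \<alpha>_def)
  have p1: "p \<ge> 1" unfolding p_def by (simp add: Suc_le_eq)
  define A where "A = sum a UNIV"
  define b where "b = (\<lambda>i. a i * l i)"
  have a_def': "a i = 1 / (l i + \<alpha>)" for i by (simp add: a_def \<alpha>_def)
  have apos: "a i > 0" for i using l0[of i] al by (simp add: a_def')
  have lT: "l i \<le> T" for i unfolding T by (rule member_le_sum) (auto intro: l0)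
  have aU: "a i \<le> 1/\<alpha>" for i using l0[of i] al by (simp add: a_def' frac_le)
  have aL: "1/(T+\<alpha>) \<le> a i" for i using lT[of i] l0[of i] al by (simp add: a_def' frac_le)
  have bA: "b i = 1 - \<alpha> * a i" for i
    using l0[of i] al by (simp add: b_def a_def' field_simps)
  have b0: "b i \<ge> 0" for i using apos[of i] l0[of i] by (simp add: b_def)
  have Sb: "sum b UNIV = p - \<alpha> * A"
    by (simp add: bA sum_subtractf A_def sum_distrib_left p_def)
  have A0: "A \<ge> 0" unfolding A_def using apos by (simp add: sum_nonneg less_imp_le)
  have Alow: "A \<ge> p^2 / (T * (1 + c*p))"
    using scalar_part[OF l0 T Tp c] unfolding A_def a_def p_def .
  have Aup: "A \<le> p / \<alpha>"
  proof -
    have "A \<le> sum (\<lambda>i. 1/\<alpha>) (UNIV::'n set)" unfolding A_def using sum_mono[of UNIV a "\<lambda>_. 1/\<alpha>"] aU by simp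
    thus ?thesis by (simp add: p_def)
  qed
  have aA: "a i \<le> A" for i unfolding A_def by (rule member_le_sum) (auto intro: less_imp_le apos)
  have cp: "1 + c * p > 0" using c p1 by (simp add: add_pos_pos)
  have S1l: "1/(1+c) \<le> sum b UNIV"
  proof -
    have "sum (\<lambda>i. l i / (T + \<alpha>)) UNIV \<le> sum b UNIV"
      unfolding b_def
    proof (rule sum_mono)
      fix i show "l i / (T + \<alpha>) \<le> a i * l i"
        using mult_right_mono[OF aL[of i] l0[of i]] by simp
    qed
    moreover have "sum (\<lambda>i. l i / (T + \<alpha>)) UNIV = 1/(1+c)"
    proof -
      have "T + T * c > 0" using Tp c by (simp add: add_pos_pos)
      thus ?thesis using Tp c by (simp add: sum_divide_distrib[symmetric] T[symmetric] \<alpha>_def field_simps)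
    qed
    ultimately show ?thesis by simp
  qed
  have S1u: "sum b UNIV \<le> p / (1 + c*p)"
  proof -
    have "\<alpha> * A \<ge> \<alpha> * (p^2 / (T * (1 + c*p)))" using mult_left_mono[OF Alow] al by simp
    moreover have "\<alpha> * (p^2 / (T * (1 + c*p))) = p - p / (1 + c*p)"
      using Tp cp mult_pos_pos[OF Tp cp] unfolding \<alpha>_def by (simp add: field_simps power2_eq_square)
    ultimately show ?thesis using Sb by simp
  qed
  have S2l: "p^2 / (1 + c * p) \<le> A * T"
  proof -
    have "A * T \<ge> p^2 / (T * (1 + c*p)) * T" using mult_right_mono[OF Alow, of T] Tp by simp
    moreover have "p^2 / (T * (1 + c*p)) * T = p^2 / (1 + c * p)" using Tp by simp
    ultimately show ?thesis by simp
  qed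
  have S2u: "A * T \<le> p / c"
  proof -
    have "A * T \<le> p / \<alpha> * T" using mult_right_mono[OF Aup, of T] Tp by simp
    thus ?thesis using Tp by (simp add: \<alpha>_def)
  qed
  have ch1: "p * (\<Sum>i\<in>UNIV. a i * b i) \<le> A * sum b UNIV"
    unfolding p_def A_def
  proof (rule cheb)
    fix i j show "(a i - a j) * (b i - b j) \<le> 0"
    proof -
      have "(a i - a j) * (b i - b j) = - (\<alpha> * (a i - a j)^2)" by (simp add: bA power2_eq_square algebra_simps)
      thus ?thesis using al by simp
    qed
  qed
  have S3: "(\<Sum>i\<in>UNIV. a i * b i) \<le> A / (1 + c*p)"
  proof -
    have "p * (\<Sum>i\<in>UNIV. a i * b i) \<le> A * (p / (1 + c*p))"
      using ch1 mult_left_mono[OF S1u A0] by linarith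
    thus ?thesis using p1 cp by (intro div_help[of p]) auto
  qed
  have cp1: "1 + c*p \<ge> 1" using c p1 by simp
  have S3b: "A / (1 + c*p) \<le> A" using div_ge1[OF A0 cp1] .
  have ch2: "p * (\<Sum>i\<in>UNIV. (a i * a i) * b i) \<le> (\<Sum>i\<in>UNIV. a i * a i) * sum b UNIV"
    unfolding p_def
  proof (rule cheb)
    fix i j show "(a i * a i - a j * a j) * (b i - b j) \<le> 0"
    proof -
      have "(a i * a i - a j * a j) * (b i - b j) = - (\<alpha> * (a i + a j) * (a i - a j)^2)"
        by (simp add: bA power2_eq_square algebra_simps)
      moreover have "\<alpha> * (a i + a j) * (a i - a j)^2 \<ge> 0"
        using al apos[of i] apos[of j] by simp
      ultimately show ?thesis by simp
    qed
  qed
  have Sa2: "(\<Sum>i\<in>UNIV. a i * a i) \<ge> 0" by (simp add: sum_nonneg)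
  have S4: "(\<Sum>i\<in>UNIV. (a i * a i) * b i) \<le> (\<Sum>i\<in>UNIV. a i * a i) / (1 + c*p)"
  proof -
    have "p * (\<Sum>i\<in>UNIV. (a i * a i) * b i) \<le> (\<Sum>i\<in>UNIV. a i * a i) * (p / (1 + c*p))"
      using ch2 mult_left_mono[OF S1u Sa2] by linarith
    thus ?thesis using p1 cp by (intro div_help[of p]) auto
  qed
  have Sa2A: "(\<Sum>i\<in>UNIV. a i * a i) \<le> A^2"
  proof -
    have "(\<Sum>i\<in>UNIV. a i * a i) \<le> (\<Sum>i\<in>UNIV. a i * A)"
      by (rule sum_mono) (use apos aA in \<open>auto intro: mult_left_mono less_imp_le\<close>)
    also have "\<dots> = A^2" by (simp add: sum_distrib_right[symmetric] A_def power2_eq_square)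
    finally show ?thesis .
  qed
  have S4b: "(\<Sum>i\<in>UNIV. a i * a i) / (1 + c*p) \<le> A^2 / (1 + c*p)"
    using Sa2A cp by (simp add: divide_right_mono)
  have Sab0: "(\<Sum>i\<in>UNIV. a i * b i) \<ge> 0" using apos b0 by (simp add: sum_nonneg less_imp_le)
  have S5: "(\<Sum>i\<in>UNIV. (a i * a i) * b i) \<le> (\<Sum>i\<in>UNIV. a i * b i) * A"
  proof -
    have "(\<Sum>i\<in>UNIV. (a i * a i) * b i) \<le> (\<Sum>i\<in>UNIV. (a i * b i) * A)"
    proof (rule sum_mono)
      fix i
      have "(a i * b i) * a i \<le> (a i * b i) * A"
        using mult_left_mono[OF aA[of i], of "a i * b i"] apos[of i] b0[of i] by simp
      thus "(a i * a i) * b i \<le> (a i * b i) * A" by (simp add: algebra_simps)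
    qed
    thus ?thesis by (simp add: sum_distrib_right)
  qed
  define r where "r = (1 + p*c)/(1+c)"
  have r0: "r > 0" using c p1 by (simp add: r_def add_pos_pos)
  have key: "a i * r \<le> A" for i
  proof -
    define k where "k = c/(1+c)"
    have ka: "k * a i \<le> a j" for j
    proof -
      have "k * a i \<le> k * (1/\<alpha>)" using mult_left_mono[OF aU[of i], of k] c by (simp add: k_def)
      also have "\<dots> = 1/(T+\<alpha>)" using c Tp by (simp add: k_def \<alpha>_def field_simps)
      finally show ?thesis using aL[of j] by simp
    qed
    have "a i - k * a i \<le> (\<Sum>j\<in>UNIV. a j - k * a i)"
      by (rule member_le_sum[where f="\<lambda>j. a j - k * a i"]) (use ka in auto)
    also have "\<dots> = A - p * k * a i" by (simp add: sum_subtractf A_def p_def)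
    finally have "a i * (1 - k + p * k) \<le> A" by (simp add: algebra_simps)
    moreover have "1 - k + p * k = r" using c by (simp add: k_def r_def field_simps)
    ultimately show ?thesis by simp
  qed
  have rK: "1 / r \<le> 1 - (p - 1) * c / (p * (1 + c))"
  proof -
    have "1 / r = (1+c)/(1+p*c)" by (simp add: r_def)
    moreover have "(1+c)/(1+p*c) \<le> 1 - (p - 1) * c / (p * (1 + c))"
    proof -
      have pc: "1 + p*c > 0" "p*(1+c) > 0" using c p1 by (auto simp: add_pos_pos)
      have "c * (p - 1)^2 \<ge> 0" using c by simp
      hence "(1+c) * (p*(1+c)) \<le> (p*(1+c) - (p-1)*c) * (1+p*c)"
        by (simp add: algebra_simps power2_eq_square)
      thus ?thesis using pc by (simp add: field_simps)
    qed
    ultimately show ?thesis by simp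
  qed
  have S6: "(\<Sum>i\<in>UNIV. a i * a i) \<le> A^2 * (1 - (p - 1) * c / (p * (1 + c)))"
  proof -
    have "r * (\<Sum>i\<in>UNIV. a i * a i) = (\<Sum>i\<in>UNIV. a i * (a i * r))"
      by (simp add: sum_distrib_left algebra_simps)
    also have "\<dots> \<le> (\<Sum>i\<in>UNIV. a i * A)"
      by (rule sum_mono) (use apos key in \<open>auto intro: mult_left_mono less_imp_le\<close>)
    also have "\<dots> = A^2" by (simp add: sum_distrib_right[symmetric] A_def power2_eq_square)
    finally have "(\<Sum>i\<in>UNIV. a i * a i) \<le> A^2 * (1/r)" using r0 by (simp add: field_simps)
    also have "\<dots> \<le> A^2 * (1 - (p - 1) * c / (p * (1 + c)))"
      using mult_left_mono[OF rK, of "A^2"] by simp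
    finally show ?thesis .
  qed
  have S7: "(\<Sum>i\<in>UNIV. (a i * a i) * b i) \<le> (\<Sum>i\<in>UNIV. a i * b i) * A * (1 - (p - 1) * c / (p * (1 + c)))"
  proof -
    have "r * (\<Sum>i\<in>UNIV. (a i * a i) * b i) = (\<Sum>i\<in>UNIV. (a i * b i) * (a i * r))"
      by (simp add: sum_distrib_left algebra_simps)
    also have "\<dots> \<le> (\<Sum>i\<in>UNIV. (a i * b i) * A)"
      by (rule sum_mono) (use apos b0 key in \<open>auto intro: mult_left_mono less_imp_le\<close>)
    also have "\<dots> = (\<Sum>i\<in>UNIV. a i * b i) * A" by (simp add: sum_distrib_right)
    finally have "(\<Sum>i\<in>UNIV. (a i * a i) * b i) \<le> ((\<Sum>i\<in>UNIV. a i * b i) * A) * (1/r)"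
      using r0 by (simp add: field_simps)
    also have "\<dots> \<le> ((\<Sum>i\<in>UNIV. a i * b i) * A) * (1 - (p - 1) * c / (p * (1 + c)))"
      using mult_left_mono[OF rK, of "(\<Sum>i\<in>UNIV. a i * b i) * A"] Sab0 A0 by simp
    finally show ?thesis .
  qed
  define x where "x = (\<lambda>i. T * a i - b i)"
  have x0: "x i \<ge> 0" for i
  proof -
    have "x i = (T - l i) * a i" by (simp add: x_def b_def algebra_simps)
    thus ?thesis using lT[of i] apos[of i] by simp
  qed
  have Sx: "sum x UNIV = A * T - sum b UNIV"
    by (simp add: x_def sum_subtractf A_def sum_distrib_left mult.commute)
  have E: "- sum b UNIV + (1 + c) * (\<Sum>i\<in>UNIV. b i * b i) = - c * (\<Sum>i\<in>UNIV. x i * b i)"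
  proof -
    have "- sum b UNIV + (1 + c) * (\<Sum>i\<in>UNIV. b i * b i) = (\<Sum>i\<in>UNIV. - b i + (1+c) * (b i * b i))"
      by (simp add: sum.distrib sum_distrib_left sum_negf sum_subtractf)
    also have "\<dots> = (\<Sum>i\<in>UNIV. - c * (x i * b i))"
    proof (rule sum.cong)
      fix i
      have "- b i + (1+c) * (b i * b i) = b i * ((1+c) * b i - 1)" by (simp add: algebra_simps)
      also have "(1+c) * b i - 1 = - c * x i"
        by (simp add: x_def bA algebra_simps \<alpha>_def)
      finally show "- b i + (1+c) * (b i * b i) = - c * (x i * b i)" by (simp add: algebra_simps)
    qed simp
    also have "\<dots> = - c * (\<Sum>i\<in>UNIV. x i * b i)" by (simp add: sum_distrib_left)
    finally show ?thesis .
  qed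
  have Sxb0: "(\<Sum>i\<in>UNIV. x i * b i) \<ge> 0" using x0 b0 by (simp add: sum_nonneg)
  have ch3: "p * (\<Sum>i\<in>UNIV. x i * b i) \<le> sum x UNIV * sum b UNIV"
    unfolding p_def
  proof (rule cheb)
    fix i j show "(x i - x j) * (b i - b j) \<le> 0"
    proof -
      have "(x i - x j) * (b i - b j) = - ((T + \<alpha>) * \<alpha> * (a i - a j)^2)"
        by (simp add: x_def bA power2_eq_square algebra_simps)
      moreover have "(T + \<alpha>) * \<alpha> * (a i - a j)^2 \<ge> 0" using al Tp by simp
      ultimately show ?thesis by simp
    qed
  qed
  have Sx0: "sum x UNIV \<ge> 0" using x0 by (simp add: sum_nonneg)
  have S8a: "(\<Sum>i\<in>UNIV. x i * b i) \<le> sum x UNIV / (1 + c*p)"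
  proof -
    have "p * (\<Sum>i\<in>UNIV. x i * b i) \<le> sum x UNIV * (p / (1 + c*p))"
      using ch3 mult_left_mono[OF S1u Sx0] by linarith
    thus ?thesis using p1 cp by (intro div_help[of p]) auto
  qed
  have S8l: "- c * (A * T - sum b UNIV) / (1 + c*p) \<le> - c * (\<Sum>i\<in>UNIV. x i * b i)"
  proof -
    have "c * (\<Sum>i\<in>UNIV. x i * b i) \<le> c * (sum x UNIV / (1 + c*p))"
      using mult_left_mono[OF S8a, of c] c by simp
    thus ?thesis by (simp add: Sx)
  qed
  have S8u: "- c * (\<Sum>i\<in>UNIV. x i * b i) \<le> 0" using Sxb0 c by simp
  have conv: "(\<Sum>i\<in>UNIV. a i * a i * l i) = (\<Sum>i\<in>UNIV. a i * b i)"
     "(\<Sum>i\<in>UNIV. a i * a i * a i * l i) = (\<Sum>i\<in>UNIV. (a i * a i) * b i)"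
     "(\<Sum>i\<in>UNIV. a i * a i * l i * l i) = (\<Sum>i\<in>UNIV. b i * b i)"
     "(\<Sum>i\<in>UNIV. a i * l i) = sum b UNIV"
    by (simp_all add: b_def algebra_simps)
  show ?thesis unfolding conv A_def[symmetric]
    using S1l S1u S2l S2u S3 S3b S4 S4b S5 S6 S7 S8l S8u E by simp

qed



lemma sym_inner:
  fixes A :: "real^'n^'n"
  assumes "transpose A = A"
  shows "x \<bullet> (A *v y) = (A *v x) \<bullet> y"
proof -
  have "x \<bullet> (A *v y) = (x v* A) \<bullet> y" by (simp add: dot_lmul_matrix)
  also have "x v* A = transpose A *v x" by simp
  finally show ?thesis using assms by simp
qed

lemma quad_scale:
  fixes A :: "real^'n^'n"
  shows "(r *\<^sub>R y) \<bullet> (A *v (r *\<^sub>R y)) = r^2 * (y \<bullet> (A *v y))"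
  by (simp add: matrix_vector_mult_scaleR power2_eq_square)

lemma eig_exists:
  fixes A :: "real^'n^'n"
  assumes sym: "transpose A = A" and S: "subspace S" and inv: "\<And>x. x \<in> S \<Longrightarrow> A *v x \<in> S"
    and ne: "S \<noteq> {0}"
  shows "\<exists>v\<in>S. norm v = 1 \<and> (\<exists>\<mu>. A *v v = \<mu> *\<^sub>R v)"
proof -
  define K where "K = S \<inter> sphere 0 1"
  have "compact K"
    using compact_Int_closed[OF compact_sphere closed_subspace[OF S], of 0 1] by (simp add: K_def Int_commute)
  moreover have "K \<noteq> {}"
  proof -
    obtain x where x: "x \<in> S" "x \<noteq> 0" using ne S subspace_0 by blast
    have "(1/norm x) *\<^sub>R x \<in> K" using x S unfolding K_def by (simp add: subspace_scale)
    thus ?thesis by blast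
  qed
  moreover have "continuous_on K (\<lambda>x. x \<bullet> (A *v x))"
    by (intro continuous_intros linear_continuous_on matrix_vector_mul_linear)
  ultimately obtain v where vK: "v \<in> K" and vmax: "\<And>y. y \<in> K \<Longrightarrow> y \<bullet> (A *v y) \<le> v \<bullet> (A *v v)"
    using continuous_attains_sup[of K "\<lambda>x. x \<bullet> (A *v x)"] by blast
  define lam where "lam = v \<bullet> (A *v v)"
  have vS: "v \<in> S" and vn: "norm v = 1" using vK by (auto simp: K_def)
  have vv: "v \<bullet> v = 1" using vn by (simp add: dot_square_norm)
  have Q: "y \<bullet> (A *v y) \<le> lam * (y \<bullet> y)" if yS: "y \<in> S" for y
  proof (cases "y = 0")
    case True thus ?thesis by simp
  next
    case False
    define r where "r = 1 / norm y"
    have "r *\<^sub>R y \<in> K" using yS S False by (simp add: K_def r_def subspace_scale)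
    hence "r^2 * (y \<bullet> (A *v y)) \<le> lam" using vmax quad_scale by (metis lam_def)
    moreover have "r^2 = 1 / (y \<bullet> y)" by (simp add: r_def dot_square_norm power_one_over)
    moreover have "y \<bullet> y > 0" using False by simp
    ultimately show ?thesis by (simp add: field_simps)
  qed
  define w where "w = A *v v - lam *\<^sub>R v"
  have wS: "w \<in> S" unfolding w_def using inv[OF vS] vS S by (simp add: subspace_diff subspace_scale)
  have vw: "v \<bullet> w = 0" by (simp add: w_def inner_diff_right vv lam_def)
  have wAv: "w \<bullet> (A *v v) = w \<bullet> w"
  proof -
    have "A *v v = w + lam *\<^sub>R v" by (simp add: w_def)
    hence "w \<bullet> (A *v v) = w \<bullet> w + lam * (w \<bullet> v)" by (simp add: inner_add_right)
    thus ?thesis using vw by (simp add: inner_commute)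
  qed
  have "w = 0"
  proof (rule ccontr)
    assume wn: "w \<noteq> 0"
    define ww where "ww = w \<bullet> w"
    have ww0: "ww > 0" using wn by (simp add: ww_def)
    define D where "D = lam * ww - w \<bullet> (A *v w)"
    define t where "t = ww / (\<bar>D\<bar> + 1)"
    have t0: "t > 0" using ww0 by (simp add: t_def add_pos_nonneg)
    have yS: "v + t *\<^sub>R w \<in> S" using vS wS S by (simp add: subspace_add subspace_scale)
    have e1: "(v + t *\<^sub>R w) \<bullet> (A *v (v + t *\<^sub>R w)) = lam + 2 * t * ww + t^2 * (w \<bullet> (A *v w))"
    proof -
      have "v \<bullet> (A *v w) = w \<bullet> (A *v v)" using sym_inner[OF sym, of v w] by (simp add: inner_commute)
      thus ?thesis using wAv
        by (simp add: matrix_vector_right_distrib matrix_vector_mult_scaleR inner_add_left inner_add_right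
            lam_def ww_def power2_eq_square algebra_simps)
    qed
    have e2: "(v + t *\<^sub>R w) \<bullet> (v + t *\<^sub>R w) = 1 + t^2 * ww"
      using vw vv by (simp add: inner_add_left inner_add_right ww_def power2_eq_square inner_commute)
    have "lam + 2 * t * ww + t^2 * (w \<bullet> (A *v w)) \<le> lam * (1 + t^2 * ww)"
      using Q[OF yS] e1 e2 by simp
    hence "2 * t * ww \<le> t^2 * D" by (simp add: D_def algebra_simps)
    hence "2 * ww \<le> t * D" using t0 by (simp add: power2_eq_square)
    also have "t * D \<le> t * \<bar>D\<bar>" using t0 by simp
    also have "t * \<bar>D\<bar> < ww"
    proof -
      have "t * \<bar>D\<bar> = ww * (\<bar>D\<bar> / (\<bar>D\<bar> + 1))" by (simp add: t_def)
      also have "\<dots> < ww * 1" using ww0 by (intro mult_strict_left_mono) auto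
      finally show ?thesis by simp
    qed
    finally show False using ww0 by simp
  qed
  hence "A *v v = lam *\<^sub>R v" by (simp add: w_def)
  thus ?thesis using vS vn by blast
qed

lemma spectral_sub:
  fixes A :: "real^'n^'n"
  assumes sym: "transpose A = A"
  shows "subspace S \<Longrightarrow> (\<And>x. x \<in> S \<Longrightarrow> A *v x \<in> S) \<Longrightarrow>
    \<exists>B. B \<subseteq> S \<and> pairwise orthogonal B \<and> (\<forall>b\<in>B. norm b = 1 \<and> (\<exists>\<mu>. A *v b = \<mu> *\<^sub>R b)) \<and> S \<subseteq> span B"
proof (induction "dim S" arbitrary: S rule: less_induct)
  case (less S)
  show ?case
  proof (cases "S = {0}")
    case True
    thus ?thesis by (intro exI[of _ "{}"]) auto
  next
    case False
    obtain v \<mu> where vS: "v \<in> S" and vn: "norm v = 1" and ev: "A *v v = \<mu> *\<^sub>R v"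
      using eig_exists[OF sym less.prems(1) less.prems(2) False] by blast
    have vv: "v \<bullet> v = 1" using vn by (simp add: dot_square_norm)
    define S' where "S' = {x \<in> S. v \<bullet> x = 0}"
    have sub': "subspace S'" using less.prems(1)
      unfolding S'_def subspace_def by (auto simp: inner_add_right)
    have inv': "A *v x \<in> S'" if "x \<in> S'" for x
    proof -
      have "v \<bullet> (A *v x) = (A *v v) \<bullet> x" by (rule sym_inner[OF sym])
      also have "\<dots> = 0" using that by (simp add: ev S'_def)
      finally show ?thesis using that less.prems(2) by (simp add: S'_def)
    qed
    have "dim S' < dim S"
    proof (rule dim_psubset)
      have "span S' = S'" using sub' span_eq_iff by blast
      moreover have "span S = S" using less.prems(1) span_eq_iff by blast
      moreover have "S' \<subset> S"
      proof -
        have "v \<notin> S'" using vv by (simp add: S'_def)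
        moreover have "S' \<subseteq> S" by (auto simp: S'_def)
        ultimately show ?thesis using vS by blast
      qed
      ultimately show "span S' \<subset> span S" by (simp only:)
    qed
    then obtain B' where B': "B' \<subseteq> S'" "pairwise orthogonal B'"
       "\<forall>b\<in>B'. norm b = 1 \<and> (\<exists>\<mu>. A *v b = \<mu> *\<^sub>R b)" "S' \<subseteq> span B'"
      using less.hyps[OF _ sub' inv'] by blast
    have orth: "orthogonal v b" if "b \<in> B'" for b
      using B'(1) that by (auto simp: S'_def orthogonal_def)
    show ?thesis
    proof (intro exI[of _ "insert v B'"] conjI)
      show "insert v B' \<subseteq> S" using vS B'(1) by (auto simp: S'_def)
      show "pairwise orthogonal (insert v B')"
        using B'(2) orth by (auto simp: pairwise_orthogonal_insert orthogonal_commute)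
      show "\<forall>b\<in>insert v B'. norm b = 1 \<and> (\<exists>\<mu>. A *v b = \<mu> *\<^sub>R b)" using B'(3) vn ev by auto
      show "S \<subseteq> span (insert v B')"
      proof
        fix x assume xS: "x \<in> S"
        have "x - (v \<bullet> x) *\<^sub>R v \<in> S'"
          using xS vS less.prems(1) vv by (simp add: S'_def subspace_diff subspace_scale inner_diff_right)
        hence "x - (v \<bullet> x) *\<^sub>R v \<in> span B'" using B'(4) by blast
        hence "x - (v \<bullet> x) *\<^sub>R v \<in> span (insert v B')" by (meson span_mono subset_insertI subsetD)
        moreover have "(v \<bullet> x) *\<^sub>R v \<in> span (insert v B')" by (simp add: span_base span_scale)
        ultimately have "(x - (v \<bullet> x) *\<^sub>R v) + (v \<bullet> x) *\<^sub>R v \<in> span (insert v B')" by (rule span_add)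
        thus "x \<in> span (insert v B')" by simp
      qed
    qed
  qed
qed

lemma spectral:
  fixes A :: "real^'n^'n"
  assumes sym: "transpose A = A"
  shows "\<exists>Q d. orthogonal_matrix Q \<and> (\<forall>j. A *v column j Q = d j *\<^sub>R column j Q)"
proof -
  obtain B where B: "pairwise orthogonal B" "\<forall>b\<in>B. norm b = 1 \<and> (\<exists>\<mu>. A *v b = \<mu> *\<^sub>R b)"
      "(UNIV :: (real^'n) set) \<subseteq> span B"
    using spectral_sub[OF sym, of UNIV] by auto
  have B0: "0 \<notin> B" using B(2) by auto
  have ind: "independent B" using pairwise_orthogonal_independent[OF B(1) B0] .
  have finB: "finite B" using pairwise_orthogonal_imp_finite[OF B(1)] .
  have "card B = dim (UNIV :: (real^'n) set)"
  proof -
    have "span B = UNIV" using B(3) by auto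
    hence "dim (UNIV :: (real^'n) set) = dim B" by (metis dim_span)
    thus ?thesis using dim_eq_card_independent[OF ind] by simp
  qed
  hence cB: "card B = CARD('n)" by (simp add: DIM_cart)
  obtain g where g: "bij_betw g (UNIV :: 'n set) B"
    using finite_same_card_bij[of "UNIV :: 'n set" B] finB cB by auto
  define Q :: "real^'n^'n" where "Q = (\<chi> i j. g j $ i)"
  have col: "column j Q = g j" for j by (simp add: Q_def column_def vec_eq_iff)
  have gB: "g j \<in> B" for j using g by (auto simp: bij_betw_def)
  define d where "d = (\<lambda>j. SOME \<mu>. A *v g j = \<mu> *\<^sub>R g j)"
  have dprop: "A *v g j = d j *\<^sub>R g j" for j
    unfolding d_def using B(2) gB[of j] by (metis (mono_tags, lifting) someI_ex)
  have "orthogonal_matrix Q"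
    unfolding orthogonal_matrix_orthonormal_columns col
  proof (intro conjI allI impI)
    fix i show "norm (g i) = 1" using B(2) gB by auto
  next
    fix i j :: 'n assume "i \<noteq> j"
    hence "g i \<noteq> g j" using g by (auto simp: bij_betw_def inj_on_def)
    thus "orthogonal (g i) (g j)" using B(1) gB unfolding pairwise_def by blast
  qed
  thus ?thesis using dprop col by metis
qed



definition diagm :: "('n::finite \<Rightarrow> real) \<Rightarrow> real^'n^'n" where
  "diagm d = (\<chi> i j. if i = j then d i else 0)"

lemma diagm_mult: "diagm d ** diagm e = diagm (\<lambda>i. d i * e i)"
proof -
  have "(diagm d ** diagm e) $ i $ j = diagm (\<lambda>i. d i * e i) $ i $ j" for i j
  proof -
    have "(diagm d ** diagm e) $ i $ j = (\<Sum>k\<in>UNIV. (if i = k then d i else 0) * (if k = j then e k else 0))"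
      by (simp add: diagm_def matrix_matrix_mult_def)
    also have "\<dots> = (\<Sum>k\<in>UNIV. if k = i then (if i = j then d i * e i else 0) else 0)"
      by (rule sum.cong) auto
    also have "\<dots> = diagm (\<lambda>i. d i * e i) $ i $ j" by (simp add: diagm_def)
    finally show ?thesis .
  qed
  thus ?thesis by (simp add: vec_eq_iff)
qed

lemma trace_diagm: "trace (diagm d) = sum d UNIV"
  by (simp add: diagm_def trace_def)

lemma diagm_add: "diagm d + k *\<^sub>R mat 1 = diagm (\<lambda>i. d i + k)"
  by (simp add: diagm_def mat_def vec_eq_iff)

lemma AQ:
  fixes A Q :: "real^'n^'n"
  assumes "\<And>j. A *v column j Q = d j *\<^sub>R column j Q"
  shows "A ** Q = Q ** diagm d"
proof -
  have "(A ** Q) $ i $ j = (Q ** diagm d) $ i $ j" for i j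
  proof -
    have "(A ** Q) $ i $ j = (A *v column j Q) $ i"
      by (simp add: matrix_matrix_mult_def matrix_vector_mult_def column_def)
    also have "\<dots> = d j * Q $ i $ j" using assms[of j] by (simp add: column_def)
    also have "\<dots> = (Q ** diagm d) $ i $ j"
    proof -
      have "(Q ** diagm d) $ i $ j = (\<Sum>k\<in>UNIV. Q $ i $ k * (if k = j then d k else 0))"
        by (simp add: diagm_def matrix_matrix_mult_def)
      also have "\<dots> = (\<Sum>k\<in>UNIV. if k = j then Q $ i $ j * d j else 0)"
        by (rule sum.cong) auto
      finally show ?thesis by simp
    qed
    finally show ?thesis .
  qed
  thus ?thesis by (simp add: vec_eq_iff)
qed

lemma matrix_inv_props:
  fixes A :: "'a::semiring_1^'n^'n"
  assumes "invertible A"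
  shows "A ** matrix_inv A = mat 1" "matrix_inv A ** A = mat 1"
proof -
  have "A ** matrix_inv A = mat 1 \<and> matrix_inv A ** A = mat 1"
    using assms unfolding invertible_def matrix_inv_def by (rule someI_ex)
  thus "A ** matrix_inv A = mat 1" "matrix_inv A ** A = mat 1" by auto
qed

lemma matrix_inv_eq:
  fixes A B :: "'a::comm_ring_1^'n^'n"
  assumes "A ** B = mat 1" "B ** A = mat 1"
  shows "matrix_inv A = B"
proof -
  have inv: "invertible A" using assms unfolding invertible_def by blast
  have "B = B ** (A ** matrix_inv A)" using matrix_inv_props(1)[OF inv] by (simp add: matrix_mul_rid)
  also have "\<dots> = (B ** A) ** matrix_inv A" by (simp add: matrix_mul_assoc)
  also have "\<dots> = matrix_inv A" using assms(2) by (simp add: matrix_mul_lid)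
  finally show ?thesis by simp
qed


lemma matrix_add_rdistrib':
  fixes A B C :: "real^'n^'n"
  shows "(A + B) ** C = A ** C + B ** C"
  by (simp add: matrix_matrix_mult_def vec_eq_iff sum.distrib distrib_right)

lemma matrix_scaleR_left':
  fixes A B :: "real^'n^'n"
  shows "(k *\<^sub>R A) ** B = k *\<^sub>R (A ** B)"
  by (simp add: matrix_matrix_mult_def vec_eq_iff sum_distrib_left mult.assoc)

lemma matrix_scaleR_right':
  fixes A B :: "real^'n^'n"
  shows "A ** (k *\<^sub>R B) = k *\<^sub>R (A ** B)"
  by (simp add: matrix_matrix_mult_def vec_eq_iff sum_distrib_left algebra_simps)

lemma diagm_one: "diagm (\<lambda>i. 1) = mat 1"
  by (simp add: diagm_def mat_def vec_eq_iff)


theorem lemmaA1: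
  fixes W :: "real^'n^'n" and c :: real
  assumes sim: "\<exists>S. pos_semidef S \<and> similar_mat W S"
    and trW: "trace W > 0"
    and c: "c > 0"
  defines "p \<equiv> real CARD('n)"
    and "V \<equiv> matrix_inv (W + (c * trace W) *\<^sub>R mat 1)"
  shows
    "(1 / (1 + c) \<le> trace (V ** W) \<and> trace (V ** W) \<le> p / (1 + c * p)) \<and>
     (p^2 / (1 + c * p) \<le> trace V * trace W \<and> trace V * trace W \<le> p / c) \<and>
     (trace (V ** V ** W) \<le> trace V / (1 + c * p) \<and> trace V / (1 + c * p) \<le> trace V) \<and>
     (trace (V ** V ** V ** W) \<le> trace (V ** V) / (1 + c * p) \<and>
       trace (V ** V) / (1 + c * p) \<le> (trace V)^2 / (1 + c * p)) \<and>
     (trace (V ** V ** V ** W) \<le> trace (V ** V ** W) * trace V) \<and>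
     (trace (V ** V) \<le> (trace V)^2 * (1 - (p - 1) * c / (p * (1 + c)))) \<and>
     (trace (V ** V ** V ** W) \<le> trace (V ** V ** W) * trace V * (1 - (p - 1) * c / (p * (1 + c)))) \<and>
     (- c * (trace V * trace W - trace (V ** W)) / (1 + c * p)
        \<le> - trace (V ** W) + (1 + c) * trace (V ** V ** W ** W) \<and>
     - trace (V ** W) + (1 + c) * trace (V ** V ** W ** W) \<le> 0)"
  proof -
  obtain S P :: "real^'n^'n" where Spsd: "pos_semidef S" and Pinv: "invertible P" and WS: "W = matrix_inv P ** S ** P"
    using sim unfolding similar_mat_def by metis
  have symS: "transpose S = S" using Spsd by (simp add: pos_semidef_def symmetric_matrix_def)
  obtain Q d where Qo: "orthogonal_matrix Q" and Qev: "\<forall>j. S *v column j Q = d j *\<^sub>R column j Q"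
    using spectral[OF symS] by blast
  have d0: "d j \<ge> 0" for j
  proof -
    have n: "norm (column j Q) = 1" using Qo orthogonal_matrix_orthonormal_columns by blast
    have "column j Q \<bullet> (S *v column j Q) = d j * (column j Q \<bullet> column j Q)" using Qev by simp
    also have "\<dots> = d j" using n by (simp add: dot_square_norm)
    finally show ?thesis using Spsd by (metis pos_semidef_def)
  qed
  have QQt: "transpose Q ** Q = mat 1" "Q ** transpose Q = mat 1" using Qo by (auto simp: orthogonal_matrix_def)
  have SQ: "S = Q ** diagm d ** transpose Q"
  proof -
    have "S = S ** (Q ** transpose Q)" by (simp add: QQt matrix_mul_rid)
    also have "\<dots> = (S ** Q) ** transpose Q" by (simp add: matrix_mul_assoc)
    also have "S ** Q = Q ** diagm d" by (rule AQ) (use Qev in auto)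
    finally show ?thesis .
  qed
  define R where "R = transpose Q ** P"
  define Ri where "Ri = matrix_inv P ** Q"
  have RRi: "R ** Ri = mat 1"
  proof -
    have "R ** Ri = transpose Q ** (P ** matrix_inv P) ** Q" by (simp add: R_def Ri_def matrix_mul_assoc)
    thus ?thesis by (simp add: matrix_inv_props[OF Pinv] matrix_mul_rid QQt)
  qed
  have RiR: "Ri ** R = mat 1"
  proof -
    have "Ri ** R = matrix_inv P ** (Q ** transpose Q) ** P" by (simp add: R_def Ri_def matrix_mul_assoc)
    thus ?thesis by (simp add: matrix_inv_props[OF Pinv] matrix_mul_rid QQt)
  qed
  define sm where "sm X = Ri ** X ** R" for X
  have smmul: "sm X ** sm Y = sm (X ** Y)" for X Y
  proof -
    have "sm X ** sm Y = Ri ** X ** (R ** Ri) ** Y ** R" by (simp only: sm_def matrix_mul_assoc)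
    thus ?thesis by (simp add: RRi matrix_mul_rid sm_def matrix_mul_assoc)
  qed
  have smtr: "trace (sm X) = trace X" for X
  proof -
    have "trace (sm X) = trace (R ** (Ri ** X))" unfolding sm_def by (rule trace_mul_sym)
    also have "\<dots> = trace ((R ** Ri) ** X)" by (simp only: matrix_mul_assoc)
    finally show ?thesis by (simp add: RRi matrix_mul_lid)
  qed
  have smI: "sm X + k *\<^sub>R mat 1 = sm (X + k *\<^sub>R mat 1)" for X k
    by (simp add: sm_def matrix_add_ldistrib matrix_add_rdistrib' matrix_scaleR_right' matrix_scaleR_left'
        matrix_mul_rid RiR)
  have Wsm: "W = sm (diagm d)"
    unfolding WS SQ sm_def R_def Ri_def by (simp only: matrix_mul_assoc)
  have trW': "trace W = sum d UNIV" by (simp add: Wsm smtr trace_diagm)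
  define \<alpha> where "\<alpha> = c * trace W"
  have al: "\<alpha> > 0" using c trW by (simp add: \<alpha>_def)
  define a where "a = (\<lambda>i. 1 / (d i + \<alpha>))"
  have Vsm: "V = sm (diagm a)"
  proof -
    have "W + (c * trace W) *\<^sub>R mat 1 = sm (diagm (\<lambda>i. d i + \<alpha>))"
      by (simp add: Wsm smI diagm_add \<alpha>_def)
    moreover have "sm (diagm (\<lambda>i. d i + \<alpha>)) ** sm (diagm a) = mat 1"
      "sm (diagm a) ** sm (diagm (\<lambda>i. d i + \<alpha>)) = mat 1"
    proof -
      have e: "(\<lambda>i. (d i + \<alpha>) * a i) = (\<lambda>i. 1)" "(\<lambda>i. a i * (d i + \<alpha>)) = (\<lambda>i. 1)"
        using d0 al by (auto simp: a_def fun_eq_iff add_nonneg_pos[THEN less_imp_neq, symmetric])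
      have sm1: "sm (mat 1) = mat 1" by (simp add: sm_def matrix_mul_rid RiR)
      show "sm (diagm (\<lambda>i. d i + \<alpha>)) ** sm (diagm a) = mat 1"
        "sm (diagm a) ** sm (diagm (\<lambda>i. d i + \<alpha>)) = mat 1"
        by (simp_all add: smmul diagm_mult e diagm_one sm1)
    qed
    ultimately show ?thesis unfolding V_def by (simp add: matrix_inv_eq)
  qed
  note main = scalar_main[OF d0 trW' trW c]
  show ?thesis
    using main unfolding p_def[symmetric] by (simp add: Vsm Wsm smmul diagm_mult smtr trace_diagm a_def \<alpha>_def)
qed

end
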